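(* Let $\alpha_a$ be a labeled dGL hybrid game and $\varphi$ a formula. The model predictive Angelic subvalue map $M$ for $\alpha_a$ and Angel winning condition $\varphi$ is an inductive Angelic subvalue map for $\alpha_a$ compatible with $\varphi$ (i.e. $\models M(\mathsf{end})\rightarrow\varphi$). Dually, the model predictive Demonic subvalue map $M'$ for $\alpha_a$ and Demon winning condition $\varphi$ is an inductive Demonic subvalue map for $\alpha_a$.
   Context: Differential game logic (dGL). Hybrid games are generated by $\alpha,\beta ::= x:=e \mid \alpha;\beta \mid ?Q \mid \{x'=f(x)\,\&\,Q\} \mid \alpha^{*} \mid \alpha\cup\beta \mid x:=* \mid\ !Q \mid \{x'=f(x)\,\&\,Q\}^{d} \mid \alpha^{\times} \mid \alpha\cap\beta \mid x:=\otimes$, with $x$ a real variable (vector for ODEs), $e,f(x)$ polynomial terms, $Q$ a formula. Players Angel and Demon: $x:=e$ deterministic assignment; in $x:=*$ Angel (in $x:=\otimes$ Demon) assigns any real; in $\{x'=f(x)\&Q\}$ Angel (in $\{\cdot\}^d$ Demon) chooses a duration $r\ge 0$ of following the ODE with $Q$ true throughout; $?Q$ makes Angel lose and $!Q$ makes Demon lose if $Q$ is false; in $\alpha\cup\beta$ Angel (in $\alpha\cap\beta$ Demon) chooses the branch; in $\alpha^*$ Angel (in $\alpha^\times$ Demon) decides before each iteration whether to repeat or stop; $\alpha;\beta$ sequential. Formulas: polynomial (in)equalities closed under connectives, real quantifiers, and modalities $\langle\alpha\rangle\varphi$ (Angel can win $\alpha$ reaching $\varphi$) and $[\alpha]\varphi\equiv\neg\langle\alpha\rangle\neg\varphi$,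 with the standard dGL winning-region semantics ($\langle x:=*\rangle\varphi\leftrightarrow\exists x\varphi$, $\langle x:=\otimes\rangle\varphi\leftrightarrow\forall x\varphi$, $\langle ?Q\rangle\varphi\leftrightarrow Q\wedge\varphi$, $\langle !Q\rangle\varphi\leftrightarrow(Q\rightarrow\varphi)$, $\cup$ as disjunction, $\cap$ as conjunction, $\langle\alpha;\beta\rangle\varphi\leftrightarrow\langle\alpha\rangle\langle\beta\rangle\varphi$, Angel ODE existential, Demon ODE universal, $\langle\alpha^*\rangle$ least and $\langle\alpha^\times\rangle$ greatest fixed point). $\models$ denotes validity. Labels: every node of the syntax tree carries a unique label; $\alpha_a$ has root label $a$; $\mathrm{nodes}(\alpha_a)$ is its set of subgame labels; $\mathsf{end}$ is a special extra label. A map $S$ assigns formulas to a label set containing $\mathrm{nodes}(\alpha_a)\cup\{\mathsf{end}\}$; $S\{\mathsf{end}\mapsto Q\}$ replaces the value at $\mathsf{end}$. $\gamma_g,\delta_d$ denote immediate subgames with root labels $g,d$. Game suffix: $\mathrm{suffix}_a(\alpha_a)=\alpha_a$; for $b\ne a$: for loops $((\gamma_g)^* )_a,((\gamma_g)^\times)_a$ it is $\mathrm{suffix}_b(\gamma_g);\alpha_a$; for $\cup,\cap$ the suffix within the branch containing $b$; for $(\gamma_g;\delta_d)_a$ it is $\mathrm{suffix}_b(\gamma_g);\delta_d$ if $b\in\mathrm{nodes}(\gamma_g)$ else $\mathrm{suffix}_b(\delta_d)$. Model predictive Angelic subvalue map: $M(\mathsf{end})=\varphi$, $M(b)=\langle\mathrm{suffix}_b(\alpha_a)\rangle\varphi$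 for $b\in\mathrm{nodes}(\alpha_a)$; model predictive Demonic: $M'(\mathsf{end})=\varphi$, $M'(b)=[\mathrm{suffix}_b(\alpha_a)]\varphi$. Angelic existential projection $\mathcal{P}(\alpha_a,S)$: $(x:=* )_a\mapsto(x:=* )_a;?S(\mathsf{end})$; Angel ODE $\mapsto$ ODE$;?S(\mathsf{end})$; $(\gamma_g\cup\delta_d)_a\mapsto(?S(g);\mathcal{P}(\gamma_g,S))\cup(?S(d);\mathcal{P}(\delta_d,S))$; $((\gamma_g)^* )_a\mapsto(?S(g);\mathcal{P}(\gamma_g,S\{\mathsf{end}\mapsto S(a)\}))^*;?S(\mathsf{end})$; $(\gamma_g;\delta_d)_a\mapsto\mathcal{P}(\gamma_g,S\{\mathsf{end}\mapsto S(d)\});\mathcal{P}(\delta_d,S)$; $\cap\mapsto\mathcal{P}(\gamma_g,S)\cap\mathcal{P}(\delta_d,S)$; $((\gamma_g)^\times)_a\mapsto\mathcal{P}(\gamma_g,S\{\mathsf{end}\mapsto S(a)\})^\times$; other atomic games unchanged (labels preserved, new nodes fresh labels). Demonic existential projection $\mathcal{D}(\alpha_a,S)$: $(x:=\otimes)_a\mapsto(x:=\otimes)_a;!S(\mathsf{end})$; Demon ODE $\mapsto$ ODE$^d;!S(\mathsf{end})$; $(\gamma_g\cap\delta_d)_a\mapsto(!S(g);\mathcal{D}(\gamma_g,S))\cap(!S(d);\mathcal{D}(\delta_d,S))$; $((\gamma_g)^\times)_a\mapsto(!S(g);\mathcal{D}(\gamma_g,S\{\mathsf{end}\mapsto S(g)\vee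 S(\mathsf{end})\}))^\times;!S(\mathsf{end})$; $(\gamma_g;\delta_d)_a\mapsto\mathcal{D}(\gamma_g,S\{\mathsf{end}\mapsto S(d)\});\mathcal{D}(\delta_d,S)$; $\cup\mapsto\mathcal{D}(\gamma_g,S)\cup\mathcal{D}(\delta_d,S)$; $((\gamma_g)^* )_a\mapsto\mathcal{D}(\gamma_g,S\{\mathsf{end}\mapsto S(a)\})^*$; other atomic games unchanged. Inductive Angelic subvalue map ($S\Vdash\alpha_a$), recursively: atomic $\alpha$ (all assignments, tests, ODEs): $\models S(a)\rightarrow\langle\alpha\rangle S(\mathsf{end})$; $\cup$: $\models S(a)\rightarrow S(g)\vee S(d)$, $S\Vdash\gamma_g$, $S\Vdash\delta_d$; $\cap$: $\models S(a)\rightarrow S(g)\wedge S(d)$ and both; $;$: $\models S(a)\rightarrow S(g)$, $S\{\mathsf{end}\mapsto S(d)\}\Vdash\gamma_g$, $S\Vdash\delta_d$; $((\gamma_g)^* )_a$: $\models S(a)\rightarrow\langle\mathcal{P}(\alpha_a,S)\rangle S(\mathsf{end})$ and $S\{\mathsf{end}\mapsto S(a)\}\Vdash\gamma_g$; $((\gamma_g)^\times)_a$: $\models S(a)\rightarrow S(g)\wedge S(\mathsf{end})$ and $S\{\mathsf{end}\mapsto S(a)\}\Vdash\gamma_g$. Inductive Demonic subvalue map, recursively: atomic: $\models S(a)\rightarrow[\alpha]S(\mathsf{end})$; $\cup$: $\models S(a)\rightarrow S(g)\wedge S(d)$ and both; $\cap$: $\models S(a)\rightarrow S(g)\vee S(d)$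 and both; $;$: $\models S(a)\rightarrow S(g)$, $S\{\mathsf{end}\mapsto S(d)\}$ for $\gamma_g$, $S$ for $\delta_d$; $((\gamma_g)^* )_a$: $\models S(a)\rightarrow S(\mathsf{end})\wedge S(g)$ and $S\{\mathsf{end}\mapsto S(a)\}$ for $\gamma_g$; $((\gamma_g)^\times)_a$: $\models S(a)\rightarrow[\mathcal{D}(\alpha_a,S)]S(\mathsf{end})$ and $S\{\mathsf{end}\mapsto S(a)\}$ for $\gamma_g$. *)

theory Defs
  imports Complex_Main
begin

type_synonym vname = nat
type_synonym state = "vname \<Rightarrow> real"

datatype trm = Var vname | Const real | Plus trm trm | Times trm trm | Neg trm

text \<open>Hybrid games, every node carries a label of type 'l (first argument),
 and formulas.  ODE systems are lists of pairs (x_i, f_i(x)) standing for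
 x_i' = f_i(x).\<close>
datatype 'l game =
    Assign 'l vname trm
  | AssignAny 'l vname
  | AssignDemon 'l vname
  | Test 'l "'l fml"
  | Assert 'l "'l fml"
  | ODE 'l "(vname \<times> trm) list" "'l fml"
  | DODE 'l "(vname \<times> trm) list" "'l fml"
  | Seq 'l "'l game" "'l game"
  | Choice 'l "'l game" "'l game"
  | DChoice 'l "'l game" "'l game"
  | Loop 'l "'l game"
  | DLoop 'l "'l game"
and 'l fml =
    TT | FF
  | Geq trm trm | Gt trm trm | Eq trm trm
  | Not "'l fml" | And "'l fml" "'l fml" | Or "'l fml" "'l fml" | Imp "'l fml" "'l fml"
  | Exists vname "'l fml" | Forall vname "'l fml"
  | Dia "'l game" "'l fml"

definition Box :: "'l game \<Rightarrow> 'l fml \<Rightarrow> 'l fml" where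
  "Box \<alpha> \<phi> = Not (Dia \<alpha> (Not \<phi>))"

primrec tsem :: "trm \<Rightarrow> state \<Rightarrow> real" where
  "tsem (Var x) \<omega> = \<omega> x"
| "tsem (Const c) \<omega> = c"
| "tsem (Plus e1 e2) \<omega> = tsem e1 \<omega> + tsem e2 \<omega>"
| "tsem (Times e1 e2) \<omega> = tsem e1 \<omega> * tsem e2 \<omega>"
| "tsem (Neg e) \<omega> = - tsem e \<omega>"

definition ode_sol :: "(vname \<times> trm) list \<Rightarrow> state set \<Rightarrow> state \<Rightarrow> real \<Rightarrow> (real \<Rightarrow> state) \<Rightarrow> bool" where
  "ode_sol ode Qs \<omega> r sol \<longleftrightarrow>
     0 \<le> r \<and> sol 0 = \<omega>
     \<and> (\<forall>t\<in>{0..r}. \<forall>y. y \<notin> fst ` set ode \<longrightarrow> sol t y = \<omega> y)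
     \<and> (\<forall>t\<in>{0..r}. \<forall>(x,e)\<in>set ode.
           ((\<lambda>s. sol s x) has_real_derivative tsem e (sol t)) (at t within {0..r}))
     \<and> (\<forall>t\<in>{0..r}. sol t \<in> Qs)"

text \<open>game_sem alpha X is Angel's winning region of alpha for goal X;
 fml_sem phi is the set of states where phi is true.\<close>
primrec game_sem :: "'l game \<Rightarrow> state set \<Rightarrow> state set"
  and fml_sem :: "'l fml \<Rightarrow> state set" where
  "game_sem (Assign a x e) X = {\<omega>. \<omega>(x := tsem e \<omega>) \<in> X}"
| "game_sem (AssignAny a x) X = {\<omega>. \<exists>r. \<omega>(x := r) \<in> X}"
| "game_sem (AssignDemon a x) X = {\<omega>. \<forall>r. \<omega>(x := r) \<in> X}"
| "game_sem (Test a Q) X = fml_sem Q \<inter> X"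
| "game_sem (Assert a Q) X = - fml_sem Q \<union> X"
| "game_sem (ODE a ode Q) X =
     {\<omega>. \<exists>r sol. ode_sol ode (fml_sem Q) \<omega> r sol \<and> sol r \<in> X}"
| "game_sem (DODE a ode Q) X =
     {\<omega>. \<forall>r sol. ode_sol ode (fml_sem Q) \<omega> r sol \<longrightarrow> sol r \<in> X}"
| "game_sem (Seq a g d) X = game_sem g (game_sem d X)"
| "game_sem (Choice a g d) X = game_sem g X \<union> game_sem d X"
| "game_sem (DChoice a g d) X = game_sem g X \<inter> game_sem d X"
| "game_sem (Loop a g) X = lfp (\<lambda>Z. X \<union> game_sem g Z)"
| "game_sem (DLoop a g) X = gfp (\<lambda>Z. X \<inter> game_sem g Z)"
| "fml_sem TT = UNIV"
| "fml_sem FF = {}"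
| "fml_sem (Geq e1 e2) = {\<omega>. tsem e1 \<omega> \<ge> tsem e2 \<omega>}"
| "fml_sem (Gt e1 e2) = {\<omega>. tsem e1 \<omega> > tsem e2 \<omega>}"
| "fml_sem (Eq e1 e2) = {\<omega>. tsem e1 \<omega> = tsem e2 \<omega>}"
| "fml_sem (Not p) = - fml_sem p"
| "fml_sem (And p q) = fml_sem p \<inter> fml_sem q"
| "fml_sem (Or p q) = fml_sem p \<union> fml_sem q"
| "fml_sem (Imp p q) = - fml_sem p \<union> fml_sem q"
| "fml_sem (Exists x p) = {\<omega>. \<exists>r. \<omega>(x := r) \<in> fml_sem p}"
| "fml_sem (Forall x p) = {\<omega>. \<forall>r. \<omega>(x := r) \<in> fml_sem p}"
| "fml_sem (Dia g p) = game_sem g (fml_sem p)"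

definition valid :: "'l fml \<Rightarrow> bool" where
  "valid \<phi> \<longleftrightarrow> (\<forall>\<omega>. \<omega> \<in> fml_sem \<phi>)"

primrec lbl :: "'l game \<Rightarrow> 'l" where
  "lbl (Assign a x e) = a" | "lbl (AssignAny a x) = a" | "lbl (AssignDemon a x) = a"
| "lbl (Test a Q) = a" | "lbl (Assert a Q) = a" | "lbl (ODE a ode Q) = a"
| "lbl (DODE a ode Q) = a" | "lbl (Seq a g d) = a" | "lbl (Choice a g d) = a"
| "lbl (DChoice a g d) = a" | "lbl (Loop a g) = a" | "lbl (DLoop a g) = a"

primrec labels :: "'l game \<Rightarrow> 'l list" where
  "labels (Assign a x e) = [a]" | "labels (AssignAny a x) = [a]"
| "labels (AssignDemon a x) = [a]"
| "labels (Test a Q) = [a]" | "labels (Assert a Q) = [a]" | "labels (ODE a ode Q) = [a]"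
| "labels (DODE a ode Q) = [a]"
| "labels (Seq a g d) = a # labels g @ labels d"
| "labels (Choice a g d) = a # labels g @ labels d"
| "labels (DChoice a g d) = a # labels g @ labels d"
| "labels (Loop a g) = a # labels g" | "labels (DLoop a g) = a # labels g"

definition nodes :: "'l game \<Rightarrow> 'l set" where
  "nodes \<alpha> = set (labels \<alpha>)"

text \<open>Label carried by newly created nodes.  Labels of new nodes are never
 consulted by any definition below and the semantics ignores labels.\<close>
definition fresh :: 'l where "fresh = undefined"

datatype 'l slabel = N 'l | End

type_synonym 'l smap = "'l slabel \<Rightarrow> 'l fml"

primrec suffix :: "'l \<Rightarrow> 'l game \<Rightarrow> 'l game" where
  "suffix b (Assign a x e) = Assign a x e"
| "suffix b (AssignAny a x) = AssignAny a x"
| "suffix b (AssignDemon a x) = AssignDemon a x"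
| "suffix b (Test a Q) = Test a Q"
| "suffix b (Assert a Q) = Assert a Q"
| "suffix b (ODE a ode Q) = ODE a ode Q"
| "suffix b (DODE a ode Q) = DODE a ode Q"
| "suffix b (Seq a g d) = (if b = a then Seq a g d
     else if b \<in> nodes g then Seq fresh (suffix b g) d else suffix b d)"
| "suffix b (Choice a g d) = (if b = a then Choice a g d
     else if b \<in> nodes g then suffix b g else suffix b d)"
| "suffix b (DChoice a g d) = (if b = a then DChoice a g d
     else if b \<in> nodes g then suffix b g else suffix b d)"
| "suffix b (Loop a g) = (if b = a then Loop a g else Seq fresh (suffix b g) (Loop a g))"
| "suffix b (DLoop a g) = (if b = a then DLoop a g else Seq fresh (suffix b g) (DLoop a g))"

primrec proj_ang :: "'l game \<Rightarrow> 'l smap \<Rightarrow> 'l game" where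
  "proj_ang (Assign a x e) S = Assign a x e"
| "proj_ang (AssignAny a x) S = Seq fresh (AssignAny a x) (Test fresh (S End))"
| "proj_ang (AssignDemon a x) S = AssignDemon a x"
| "proj_ang (Test a Q) S = Test a Q"
| "proj_ang (Assert a Q) S = Assert a Q"
| "proj_ang (ODE a ode Q) S = Seq fresh (ODE a ode Q) (Test fresh (S End))"
| "proj_ang (DODE a ode Q) S = DODE a ode Q"
| "proj_ang (Seq a g d) S = Seq a (proj_ang g (S(End := S (N (lbl d))))) (proj_ang d S)"
| "proj_ang (Choice a g d) S =
     Choice a (Seq fresh (Test fresh (S (N (lbl g)))) (proj_ang g S))
              (Seq fresh (Test fresh (S (N (lbl d)))) (proj_ang d S))"
| "proj_ang (DChoice a g d) S = DChoice a (proj_ang g S) (proj_ang d S)"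
| "proj_ang (Loop a g) S =
     Seq fresh (Loop a (Seq fresh (Test fresh (S (N (lbl g)))) (proj_ang g (S(End := S (N a))))))
               (Test fresh (S End))"
| "proj_ang (DLoop a g) S = DLoop a (proj_ang g (S(End := S (N a))))"

primrec proj_dem :: "'l game \<Rightarrow> 'l smap \<Rightarrow> 'l game" where
  "proj_dem (Assign a x e) S = Assign a x e"
| "proj_dem (AssignAny a x) S = AssignAny a x"
| "proj_dem (AssignDemon a x) S = Seq fresh (AssignDemon a x) (Assert fresh (S End))"
| "proj_dem (Test a Q) S = Test a Q"
| "proj_dem (Assert a Q) S = Assert a Q"
| "proj_dem (ODE a ode Q) S = ODE a ode Q"
| "proj_dem (DODE a ode Q) S = Seq fresh (DODE a ode Q) (Assert fresh (S End))"
| "proj_dem (Seq a g d) S = Seq a (proj_dem g (S(End := S (N (lbl d))))) (proj_dem d S)"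
| "proj_dem (Choice a g d) S = Choice a (proj_dem g S) (proj_dem d S)"
| "proj_dem (DChoice a g d) S =
     DChoice a (Seq fresh (Assert fresh (S (N (lbl g)))) (proj_dem g S))
               (Seq fresh (Assert fresh (S (N (lbl d)))) (proj_dem d S))"
| "proj_dem (Loop a g) S = Loop a (proj_dem g (S(End := S (N a))))"
| "proj_dem (DLoop a g) S =
     Seq fresh (DLoop a (Seq fresh (Assert fresh (S (N (lbl g))))
                          (proj_dem g (S(End := Or (S (N (lbl g))) (S End))))))
               (Assert fresh (S End))"

primrec ang_subvalue :: "'l smap \<Rightarrow> 'l game \<Rightarrow> bool" where
  "ang_subvalue S (Assign a x e) = valid (Imp (S (N a)) (Dia (Assign a x e) (S End)))"
| "ang_subvalue S (AssignAny a x) = valid (Imp (S (N a)) (Dia (AssignAny a x) (S End)))"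
| "ang_subvalue S (AssignDemon a x) = valid (Imp (S (N a)) (Dia (AssignDemon a x) (S End)))"
| "ang_subvalue S (Test a Q) = valid (Imp (S (N a)) (Dia (Test a Q) (S End)))"
| "ang_subvalue S (Assert a Q) = valid (Imp (S (N a)) (Dia (Assert a Q) (S End)))"
| "ang_subvalue S (ODE a ode Q) = valid (Imp (S (N a)) (Dia (ODE a ode Q) (S End)))"
| "ang_subvalue S (DODE a ode Q) = valid (Imp (S (N a)) (Dia (DODE a ode Q) (S End)))"
| "ang_subvalue S (Choice a g d) =
     (valid (Imp (S (N a)) (Or (S (N (lbl g))) (S (N (lbl d)))))
      \<and> ang_subvalue S g \<and> ang_subvalue S d)"
| "ang_subvalue S (DChoice a g d) =
     (valid (Imp (S (N a)) (And (S (N (lbl g))) (S (N (lbl d)))))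
      \<and> ang_subvalue S g \<and> ang_subvalue S d)"
| "ang_subvalue S (Seq a g d) =
     (valid (Imp (S (N a)) (S (N (lbl g))))
      \<and> ang_subvalue (S(End := S (N (lbl d)))) g \<and> ang_subvalue S d)"
| "ang_subvalue S (Loop a g) =
     (valid (Imp (S (N a)) (Dia (proj_ang (Loop a g) S) (S End)))
      \<and> ang_subvalue (S(End := S (N a))) g)"
| "ang_subvalue S (DLoop a g) =
     (valid (Imp (S (N a)) (And (S (N (lbl g))) (S End)))
      \<and> ang_subvalue (S(End := S (N a))) g)"

primrec dem_subvalue :: "'l smap \<Rightarrow> 'l game \<Rightarrow> bool" where
  "dem_subvalue S (Assign a x e) = valid (Imp (S (N a)) (Box (Assign a x e) (S End)))"
| "dem_subvalue S (AssignAny a x) = valid (Imp (S (N a)) (Box (AssignAny a x) (S End)))"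
| "dem_subvalue S (AssignDemon a x) = valid (Imp (S (N a)) (Box (AssignDemon a x) (S End)))"
| "dem_subvalue S (Test a Q) = valid (Imp (S (N a)) (Box (Test a Q) (S End)))"
| "dem_subvalue S (Assert a Q) = valid (Imp (S (N a)) (Box (Assert a Q) (S End)))"
| "dem_subvalue S (ODE a ode Q) = valid (Imp (S (N a)) (Box (ODE a ode Q) (S End)))"
| "dem_subvalue S (DODE a ode Q) = valid (Imp (S (N a)) (Box (DODE a ode Q) (S End)))"
| "dem_subvalue S (Choice a g d) =
     (valid (Imp (S (N a)) (And (S (N (lbl g))) (S (N (lbl d)))))
      \<and> dem_subvalue S g \<and> dem_subvalue S d)"
| "dem_subvalue S (DChoice a g d) =
     (valid (Imp (S (N a)) (Or (S (N (lbl g))) (S (N (lbl d)))))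
      \<and> dem_subvalue S g \<and> dem_subvalue S d)"
| "dem_subvalue S (Seq a g d) =
     (valid (Imp (S (N a)) (S (N (lbl g))))
      \<and> dem_subvalue (S(End := S (N (lbl d)))) g \<and> dem_subvalue S d)"
| "dem_subvalue S (Loop a g) =
     (valid (Imp (S (N a)) (And (S End) (S (N (lbl g)))))
      \<and> dem_subvalue (S(End := S (N a))) g)"
| "dem_subvalue S (DLoop a g) =
     (valid (Imp (S (N a)) (Box (proj_dem (DLoop a g) S) (S End)))
      \<and> dem_subvalue (S(End := S (N a))) g)"

fun mp_ang :: "'l game \<Rightarrow> 'l fml \<Rightarrow> 'l smap" where
  "mp_ang \<alpha> \<phi> End = \<phi>"
| "mp_ang \<alpha> \<phi> (N b) = Dia (suffix b \<alpha>) \<phi>"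

fun mp_dem :: "'l game \<Rightarrow> 'l fml \<Rightarrow> 'l smap" where
  "mp_dem \<alpha> \<phi> End = \<phi>"
| "mp_dem \<alpha> \<phi> (N b) = Box (suffix b \<alpha>) \<phi>"

end

theory Submission
  imports Defs
begin


lemmas gind = game.induct[of _ "\<lambda>_. True", simplified, case_names Assign AssignAny AssignDemon Test Assert ODE DODE Seq Choice DChoice Loop DLoop]

lemma mono_gs: "mono (game_sem \<gamma>)"
proof (induction \<gamma> rule: gind)
  case (Loop a g)
  then show ?case by (auto intro!: monoI lfp_mono dest: monoD)
next
  case (DLoop a g)
  then show ?case by (auto intro!: monoI gfp_mono dest: monoD)
qed (auto intro!: monoI dest: monoD)

lemma gs_mono: "X \<subseteq> Y \<Longrightarrow> game_sem g X \<subseteq> game_sem g Y"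
  using mono_gs monoD by blast

lemma lbl_in: "lbl g \<in> nodes g"
  by (cases g) (auto simp: nodes_def)

lemma suffix_self: "suffix (lbl g) g = g"
  by (cases g) auto

lemma loop_unfold: "game_sem (Loop a g) X = X \<union> game_sem g (game_sem (Loop a g) X)"
proof -
  have "mono (\<lambda>Z. X \<union> game_sem g Z)" using mono_gs by (auto intro!: monoI dest: monoD)
  from lfp_unfold[OF this] show ?thesis by simp
qed

lemma dloop_unfold: "game_sem (DLoop a g) X = X \<inter> game_sem g (game_sem (DLoop a g) X)"
proof -
  have "mono (\<lambda>Z. X \<inter> game_sem g Z)" using mono_gs by (auto intro!: monoI dest: monoD)
  from gfp_unfold[OF this] show ?thesis by simp
qed

definition HA :: "'l smap \<Rightarrow> 'l game \<Rightarrow> bool" where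
  "HA S \<gamma> \<longleftrightarrow> (\<forall>b\<in>nodes \<gamma>. fml_sem (S (N b)) = game_sem (suffix b \<gamma>) (fml_sem (S End)))"

lemma HA_Seq:
  assumes "distinct (labels (Seq a g d))" "HA S (Seq a g d)"
  shows "HA (S(End := S (N (lbl d)))) g" "HA S d"
    "fml_sem (S (N a)) = game_sem g (game_sem d (fml_sem (S End)))"
    "fml_sem (S (N (lbl g))) = game_sem g (game_sem d (fml_sem (S End)))"
    "fml_sem (S (N (lbl d))) = game_sem d (fml_sem (S End))"
    "distinct (labels g)" "distinct (labels d)"
proof -
  have D: "distinct (labels g)" "distinct (labels d)" "a \<notin> nodes g" "a \<notin> nodes d"
    "nodes g \<inter> nodes d = {}" using assms(1) by (auto simp: nodes_def)
  have H: "\<And>b. b \<in> nodes (Seq a g d) \<Longrightarrow> fml_sem (S (N b)) = game_sem (suffix b (Seq a g d)) (fml_sem (S End))"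
    using assms(2) by (auto simp: HA_def)
  show "HA (S(End := S (N (lbl d)))) g"
    unfolding HA_def
  proof
    fix b assume b: "b \<in> nodes g"
    have "fml_sem (S (N (lbl d))) = game_sem d (fml_sem (S End))"
      using H[of "lbl d"] lbl_in[of d] D suffix_self[of d] by (auto simp: nodes_def)
    then show "fml_sem ((S(End := S (N (lbl d)))) (N b)) = game_sem (suffix b g) (fml_sem ((S(End := S (N (lbl d)))) End))"
      using H[of b] b D by (auto simp: nodes_def)
  qed
  show "HA S d" unfolding HA_def
  proof
    fix b assume b: "b \<in> nodes d"
    then show "fml_sem (S (N b)) = game_sem (suffix b d) (fml_sem (S End))"
      using H[of b] D by (auto simp: nodes_def)
  qed
  show "fml_sem (S (N a)) = game_sem g (game_sem d (fml_sem (S End)))"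
    using H[of a] by (simp add: nodes_def)
  show "fml_sem (S (N (lbl g))) = game_sem g (game_sem d (fml_sem (S End)))"
    using H[of "lbl g"] lbl_in[of g] D suffix_self[of g] by (auto simp: nodes_def)
  show "fml_sem (S (N (lbl d))) = game_sem d (fml_sem (S End))"
    using H[of "lbl d"] lbl_in[of d] D suffix_self[of d] by (auto simp: nodes_def)
  show "distinct (labels g)" "distinct (labels d)" using D by auto
qed

lemma HA_Choice:
  assumes "distinct (labels (Choice a g d))" "HA S (Choice a g d)"
  shows "HA S g" "HA S d"
    "fml_sem (S (N a)) = game_sem g (fml_sem (S End)) \<union> game_sem d (fml_sem (S End))"
    "fml_sem (S (N (lbl g))) = game_sem g (fml_sem (S End))"
    "fml_sem (S (N (lbl d))) = game_sem d (fml_sem (S End))"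
    "distinct (labels g)" "distinct (labels d)"
proof -
  have D: "distinct (labels g)" "distinct (labels d)" "a \<notin> nodes g" "a \<notin> nodes d"
    "nodes g \<inter> nodes d = {}" using assms(1) by (auto simp: nodes_def)
  have H: "\<And>b. b \<in> nodes (Choice a g d) \<Longrightarrow> fml_sem (S (N b)) = game_sem (suffix b (Choice a g d)) (fml_sem (S End))"
    using assms(2) by (auto simp: HA_def)
  show "HA S g" unfolding HA_def
  proof
    fix b assume b: "b \<in> nodes g"
    then show "fml_sem (S (N b)) = game_sem (suffix b g) (fml_sem (S End))"
      using H[of b] D by (auto simp: nodes_def)
  qed
  show "HA S d" unfolding HA_def
  proof
    fix b assume b: "b \<in> nodes d"
    then show "fml_sem (S (N b)) = game_sem (suffix b d) (fml_sem (S End))"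
      using H[of b] D by (auto simp: nodes_def)
  qed
  show "fml_sem (S (N a)) = game_sem g (fml_sem (S End)) \<union> game_sem d (fml_sem (S End))"
    using H[of a] by (simp add: nodes_def)
  show "fml_sem (S (N (lbl g))) = game_sem g (fml_sem (S End))"
    using H[of "lbl g"] lbl_in[of g] D suffix_self[of g] by (auto simp: nodes_def)
  show "fml_sem (S (N (lbl d))) = game_sem d (fml_sem (S End))"
    using H[of "lbl d"] lbl_in[of d] D suffix_self[of d] by (auto simp: nodes_def)
  show "distinct (labels g)" "distinct (labels d)" using D by auto
qed

lemma HA_DChoice:
  assumes "distinct (labels (DChoice a g d))" "HA S (DChoice a g d)"
  shows "HA S g" "HA S d"
    "fml_sem (S (N a)) = game_sem g (fml_sem (S End)) \<inter> game_sem d (fml_sem (S End))"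
    "fml_sem (S (N (lbl g))) = game_sem g (fml_sem (S End))"
    "fml_sem (S (N (lbl d))) = game_sem d (fml_sem (S End))"
    "distinct (labels g)" "distinct (labels d)"
proof -
  have D: "distinct (labels g)" "distinct (labels d)" "a \<notin> nodes g" "a \<notin> nodes d"
    "nodes g \<inter> nodes d = {}" using assms(1) by (auto simp: nodes_def)
  have H: "\<And>b. b \<in> nodes (DChoice a g d) \<Longrightarrow> fml_sem (S (N b)) = game_sem (suffix b (DChoice a g d)) (fml_sem (S End))"
    using assms(2) by (auto simp: HA_def)
  show "HA S g" unfolding HA_def
  proof
    fix b assume b: "b \<in> nodes g"
    then show "fml_sem (S (N b)) = game_sem (suffix b g) (fml_sem (S End))"
      using H[of b] D by (auto simp: nodes_def)
  qed
  show "HA S d" unfolding HA_def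
  proof
    fix b assume b: "b \<in> nodes d"
    then show "fml_sem (S (N b)) = game_sem (suffix b d) (fml_sem (S End))"
      using H[of b] D by (auto simp: nodes_def)
  qed
  show "fml_sem (S (N a)) = game_sem g (fml_sem (S End)) \<inter> game_sem d (fml_sem (S End))"
    using H[of a] by (simp add: nodes_def)
  show "fml_sem (S (N (lbl g))) = game_sem g (fml_sem (S End))"
    using H[of "lbl g"] lbl_in[of g] D suffix_self[of g] by (auto simp: nodes_def)
  show "fml_sem (S (N (lbl d))) = game_sem d (fml_sem (S End))"
    using H[of "lbl d"] lbl_in[of d] D suffix_self[of d] by (auto simp: nodes_def)
  show "distinct (labels g)" "distinct (labels d)" using D by auto
qed

lemma HA_Loop:
  assumes "distinct (labels (Loop a g))" "HA S (Loop a g)"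
  shows "HA (S(End := S (N a))) g"
    "fml_sem (S (N a)) = game_sem (Loop a g) (fml_sem (S End))"
    "fml_sem (S (N (lbl g))) = game_sem g (game_sem (Loop a g) (fml_sem (S End)))"
    "distinct (labels g)"
proof -
  have D: "distinct (labels g)" "a \<notin> nodes g" using assms(1) by (auto simp: nodes_def)
  have H: "\<And>b. b \<in> nodes (Loop a g) \<Longrightarrow> fml_sem (S (N b)) = game_sem (suffix b (Loop a g)) (fml_sem (S End))"
    using assms(2) by (auto simp: HA_def)
  have Ha: "fml_sem (S (N a)) = game_sem (Loop a g) (fml_sem (S End))"
    using H[of a] by (simp add: nodes_def)
  then show "fml_sem (S (N a)) = game_sem (Loop a g) (fml_sem (S End))" .
  show "HA (S(End := S (N a))) g" unfolding HA_def
  proof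
    fix b assume b: "b \<in> nodes g"
    then show "fml_sem ((S(End := S (N a))) (N b)) = game_sem (suffix b g) (fml_sem ((S(End := S (N a))) End))"
      using H[of b] D Ha by (auto simp: nodes_def simp del: game_sem.simps(11))
  qed
  show "fml_sem (S (N (lbl g))) = game_sem g (game_sem (Loop a g) (fml_sem (S End)))"
    using H[of "lbl g"] lbl_in[of g] D suffix_self[of g] by (auto simp: nodes_def simp del: game_sem.simps(11))
  show "distinct (labels g)" using D by auto
qed

lemma HA_DLoop:
  assumes "distinct (labels (DLoop a g))" "HA S (DLoop a g)"
  shows "HA (S(End := S (N a))) g"
    "fml_sem (S (N a)) = game_sem (DLoop a g) (fml_sem (S End))"
    "fml_sem (S (N (lbl g))) = game_sem g (game_sem (DLoop a g) (fml_sem (S End)))"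
    "distinct (labels g)"
proof -
  have D: "distinct (labels g)" "a \<notin> nodes g" using assms(1) by (auto simp: nodes_def)
  have H: "\<And>b. b \<in> nodes (DLoop a g) \<Longrightarrow> fml_sem (S (N b)) = game_sem (suffix b (DLoop a g)) (fml_sem (S End))"
    using assms(2) by (auto simp: HA_def)
  have Ha: "fml_sem (S (N a)) = game_sem (DLoop a g) (fml_sem (S End))"
    using H[of a] by (simp add: nodes_def)
  then show "fml_sem (S (N a)) = game_sem (DLoop a g) (fml_sem (S End))" .
  show "HA (S(End := S (N a))) g" unfolding HA_def
  proof
    fix b assume b: "b \<in> nodes g"
    then show "fml_sem ((S(End := S (N a))) (N b)) = game_sem (suffix b g) (fml_sem ((S(End := S (N a))) End))"
      using H[of b] D Ha by (auto simp: nodes_def simp del: game_sem.simps(12))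
  qed
  show "fml_sem (S (N (lbl g))) = game_sem g (game_sem (DLoop a g) (fml_sem (S End)))"
    using H[of "lbl g"] lbl_in[of g] D suffix_self[of g] by (auto simp: nodes_def simp del: game_sem.simps(12))
  show "distinct (labels g)" using D by auto
qed

lemma HA_atom: "HA S \<gamma> \<Longrightarrow> fml_sem (S (N (lbl \<gamma>))) = game_sem \<gamma> (fml_sem (S End))"
  using lbl_in[of \<gamma>] suffix_self[of \<gamma>] by (auto simp: HA_def)

lemma projA:
  "distinct (labels \<gamma>) \<Longrightarrow> HA S \<gamma> \<Longrightarrow>
   game_sem \<gamma> (fml_sem (S End) \<inter> Y) \<subseteq> game_sem (proj_ang \<gamma> S) Y"
proof (induction \<gamma> arbitrary: S Y rule: gind)
  case (Seq a g d)
  note F = HA_Seq[OF Seq.prems]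
  have 1: "game_sem d (fml_sem (S End) \<inter> Y) \<subseteq> fml_sem (S (N (lbl d))) \<inter> game_sem (proj_ang d S) Y"
    using Seq.IH(2)[OF F(7) F(2)] F(5) gs_mono[of "fml_sem (S End) \<inter> Y" "fml_sem (S End)" d] by auto
  have 2: "game_sem g (fml_sem (S (N (lbl d))) \<inter> game_sem (proj_ang d S) Y)
     \<subseteq> game_sem (proj_ang g (S(End := S (N (lbl d))))) (game_sem (proj_ang d S) Y)"
    using Seq.IH(1)[OF F(6) F(1), of "game_sem (proj_ang d S) Y"] unfolding fun_upd_same .
  show ?case using gs_mono[OF 1, of g] 2 by simp
next
  case (Choice a g d)
  note F = HA_Choice[OF Choice.prems]
  show ?case using Choice.IH(1)[OF F(6) F(1), of Y] Choice.IH(2)[OF F(7) F(2), of Y] F(4,5)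
     gs_mono[of "fml_sem (S End) \<inter> Y" "fml_sem (S End)" g] gs_mono[of "fml_sem (S End) \<inter> Y" "fml_sem (S End)" d]
    by auto
next
  case (DChoice a g d)
  note F = HA_DChoice[OF DChoice.prems]
  show ?case using DChoice.IH(1)[OF F(6) F(1), of Y] DChoice.IH(2)[OF F(7) F(2), of Y] by auto
next
  case (Loop a g)
  note F = HA_Loop[OF Loop.prems]
  define X where "X = fml_sem (S End)"
  define L where "L = game_sem (Loop a g) X"
  define G where "G = fml_sem (S (N (lbl g)))"
  define pg where "pg = proj_ang g (S(End := S (N a)))"
  define P where "P = lfp (\<lambda>Z. (X \<inter> Y) \<union> (G \<inter> game_sem pg Z))"
  have mP: "mono (\<lambda>Z. (X \<inter> Y) \<union> (G \<inter> game_sem pg Z))"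
    using mono_gs by (auto intro!: monoI dest: monoD)
  have Pu: "P = (X \<inter> Y) \<union> (G \<inter> game_sem pg P)" unfolding P_def using lfp_unfold[OF mP] .
  have IH: "game_sem g (L \<inter> Z) \<subseteq> game_sem pg Z" for Z
    using Loop.IH[OF F(4) F(1), of Z] F(2) unfolding pg_def L_def X_def by (simp add: fun_upd_def)
  have GL: "G = game_sem g L" using F(3) unfolding G_def L_def X_def by simp
  have mL: "mono (\<lambda>Z. (X \<inter> Y) \<union> game_sem g Z)"
    using mono_gs by (auto intro!: monoI dest: monoD)
  have LY: "lfp (\<lambda>Z. (X \<inter> Y) \<union> game_sem g Z) \<subseteq> L"
    unfolding L_def by (simp, rule lfp_mono) auto
  have "lfp (\<lambda>Z. (X \<inter> Y) \<union> game_sem g Z) \<subseteq> P"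
  proof (rule lfp_induct[OF mL])
    show "X \<inter> Y \<union> game_sem g (lfp (\<lambda>Z. X \<inter> Y \<union> game_sem g Z) \<inter> P) \<subseteq> P"
    proof -
      have "game_sem g (lfp (\<lambda>Z. X \<inter> Y \<union> game_sem g Z) \<inter> P) \<subseteq> game_sem g (L \<inter> P)"
        using LY by (intro gs_mono) auto
      also have "\<dots> \<subseteq> G \<inter> game_sem pg P" using IH[of P] GL gs_mono[of "L \<inter> P" L g] by auto
      finally show ?thesis using Pu by auto
    qed
  qed
  then show ?case unfolding P_def X_def G_def pg_def by simp
next
  case (DLoop a g)
  note F = HA_DLoop[OF DLoop.prems]
  define X where "X = fml_sem (S End)"
  define L where "L = game_sem (DLoop a g) X"
  define pg where "pg = proj_ang g (S(End := S (N a)))"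
  define Q where "Q = gfp (\<lambda>Z. X \<inter> Y \<inter> game_sem g Z)"
  have mQ: "mono (\<lambda>Z. X \<inter> Y \<inter> game_sem g Z)"
    using mono_gs by (auto intro!: monoI dest: monoD)
  have Qu: "Q = X \<inter> Y \<inter> game_sem g Q" unfolding Q_def using gfp_unfold[OF mQ] .
  have IH: "game_sem g (L \<inter> Z) \<subseteq> game_sem pg Z" for Z
    using DLoop.IH[OF F(4) F(1), of Z] F(2) unfolding pg_def L_def X_def by (simp add: fun_upd_def)
  have QL: "Q \<subseteq> L" unfolding L_def Q_def by (simp, rule gfp_mono) auto
  have "Q \<subseteq> gfp (\<lambda>Z. Y \<inter> game_sem pg Z)"
  proof (rule gfp_upperbound)
    have "game_sem g Q \<subseteq> game_sem g (L \<inter> Q)" using QL by (intro gs_mono) auto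
    also have "\<dots> \<subseteq> game_sem pg Q" by (rule IH)
    finally show "Q \<subseteq> Y \<inter> game_sem pg Q" using Qu by auto
  qed
  then show ?case unfolding Q_def X_def pg_def by simp
qed (auto simp: HA_def)

lemma angA: "distinct (labels \<gamma>) \<Longrightarrow> HA S \<gamma> \<Longrightarrow> ang_subvalue S \<gamma>"
proof (induction \<gamma> arbitrary: S rule: gind)
  case (Seq a g d)
  note F = HA_Seq[OF Seq.prems]
  have "valid (Imp (S (N a)) (S (N (lbl g))))" using F(3,4) by (simp add: valid_def)
  then show ?case using Seq.IH(1)[OF F(6) F(1)] Seq.IH(2)[OF F(7) F(2)] by (simp add: fun_upd_def)
next
  case (Choice a g d)
  note F = HA_Choice[OF Choice.prems]
  show ?case using Choice.IH(1)[OF F(6) F(1)] Choice.IH(2)[OF F(7) F(2)] F(3,4,5) by (auto simp add: valid_def)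
next
  case (DChoice a g d)
  note F = HA_DChoice[OF DChoice.prems]
  show ?case using DChoice.IH(1)[OF F(6) F(1)] DChoice.IH(2)[OF F(7) F(2)] F(3,4,5) by (auto simp add: valid_def)
next
  case (Loop a g)
  note F = HA_Loop[OF Loop.prems]
  have "game_sem (Loop a g) (fml_sem (S End) \<inter> fml_sem (S End)) \<subseteq> game_sem (proj_ang (Loop a g) S) (fml_sem (S End))"
    by (rule projA[OF Loop.prems])
  then have "fml_sem (S (N a)) \<subseteq> game_sem (proj_ang (Loop a g) S) (fml_sem (S End))"
    using F(2) by simp
  then show ?case using Loop.IH[OF F(4) F(1)] by (auto simp: valid_def fun_upd_def simp del: proj_ang.simps)
next
  case (DLoop a g)
  note F = HA_DLoop[OF DLoop.prems]
  have "fml_sem (S (N a)) \<subseteq> fml_sem (S (N (lbl g))) \<inter> fml_sem (S End)"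
    using F(2,3) dloop_unfold[of a g "fml_sem (S End)"] by auto
  then show ?case using DLoop.IH[OF F(4) F(1)] by (auto simp: valid_def fun_upd_def)
qed (auto simp: valid_def dest: HA_atom simp del: game_sem.simps)

definition T :: "'l smap \<Rightarrow> 'l smap" where "T S = (\<lambda>l. fml.Not (S l))"

lemma T_upd: "(T S)(End := T S x) = T (S(End := S x))"
  by (auto simp: T_def)

lemma HA_cong: "HA S \<gamma> \<Longrightarrow> (\<And>l. fml_sem (S' l) = fml_sem (S l)) \<Longrightarrow> HA S' \<gamma>"
  by (simp add: HA_def)

lemma sem_Box[simp]: "fml_sem (Box g p) = - game_sem g (- fml_sem p)"
  by (simp add: Box_def)

lemma projD:
  "distinct (labels \<gamma>) \<Longrightarrow> HA (T S) \<gamma> \<Longrightarrow>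
   game_sem (proj_dem \<gamma> S) Y \<subseteq> game_sem \<gamma> (- fml_sem (S End) \<union> Y)"
proof (induction \<gamma> arbitrary: S Y rule: gind)
  case (Seq a g d)
  note F = HA_Seq[OF Seq.prems, unfolded T_upd]
  have 1: "game_sem (proj_dem d S) Y \<subseteq> game_sem d (- fml_sem (S End) \<union> Y)"
    using Seq.IH(2)[OF F(7) F(2)] .
  have 2: "game_sem (proj_dem g (S(End := S (N (lbl d))))) Z \<subseteq> game_sem g (game_sem d (- fml_sem (S End)) \<union> Z)" for Z
    using Seq.IH(1)[OF F(6) F(1), of Z] F(5) by (simp add: T_def fun_upd_def)
  have 3: "game_sem d (- fml_sem (S End)) \<union> game_sem d (- fml_sem (S End) \<union> Y) \<subseteq> game_sem d (- fml_sem (S End) \<union> Y)"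
    using gs_mono[of "- fml_sem (S End)" "- fml_sem (S End) \<union> Y" d] by auto
  show ?case using 2[of "game_sem (proj_dem d S) Y"] gs_mono[OF 1, of g] gs_mono[of _ _ g]
    by simp (meson "3" Un_mono gs_mono order_refl order_trans 1)
next
  case (Choice a g d)
  note F = HA_Choice[OF Choice.prems]
  show ?case using Choice.IH(1)[OF F(6) F(1), of Y] Choice.IH(2)[OF F(7) F(2), of Y] by auto
next
  case (DChoice a g d)
  note F = HA_DChoice[OF DChoice.prems]
  have "- fml_sem (S (N (lbl g))) \<subseteq> game_sem g (- fml_sem (S End) \<union> Y)"
    using F(4) gs_mono[of "- fml_sem (S End)" "- fml_sem (S End) \<union> Y" g] by (auto simp: T_def)
  moreover have "- fml_sem (S (N (lbl d))) \<subseteq> game_sem d (- fml_sem (S End) \<union> Y)"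
    using F(5) gs_mono[of "- fml_sem (S End)" "- fml_sem (S End) \<union> Y" d] by (auto simp: T_def)
  ultimately show ?case using DChoice.IH(1)[OF F(6) F(1), of Y] DChoice.IH(2)[OF F(7) F(2), of Y] by auto
next
  case (Loop a g)
  note F = HA_Loop[OF Loop.prems, unfolded T_upd]
  define X where "X = - fml_sem (S End)"
  define L where "L = game_sem (Loop a g) X"
  define pg where "pg = proj_dem g (S(End := S (N a)))"
  define R where "R = game_sem (Loop a g) (X \<union> Y)"
  have IH: "game_sem pg Z \<subseteq> game_sem g (L \<union> Z)" for Z
    using Loop.IH[OF F(4) F(1), of Z] F(2) unfolding pg_def L_def X_def by (simp add: T_def fun_upd_def)
  have LR: "L \<subseteq> R" unfolding L_def R_def by (rule gs_mono) auto
  have Ru: "R = (X \<union> Y) \<union> game_sem g R" unfolding R_def by (rule loop_unfold)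
  have "lfp (\<lambda>Z. Y \<union> game_sem pg Z) \<subseteq> R"
  proof (rule lfp_lowerbound)
    have "game_sem pg R \<subseteq> game_sem g (L \<union> R)" by (rule IH)
    also have "\<dots> \<subseteq> game_sem g R" using LR by (intro gs_mono) auto
    finally show "Y \<union> game_sem pg R \<subseteq> R" using Ru by auto
  qed
  then show ?case unfolding R_def X_def pg_def by simp
next
  case (DLoop a g)
  note F0 = HA_DLoop[OF DLoop.prems]
  define X where "X = - fml_sem (S End)"
  define \<Gamma> where "\<Gamma> = game_sem (DLoop a g) X"
  define S2 where "S2 = S(End := Or (S (N (lbl g))) (S End))"
  define pg where "pg = proj_dem g S2"
  have Na: "fml_sem (S (N a)) = - \<Gamma>" using F0(2) unfolding \<Gamma>_def X_def by (simp add: T_def) (metis double_compl)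
  have Ng: "fml_sem (S (N (lbl g))) = - game_sem g \<Gamma>" using F0(3) unfolding \<Gamma>_def X_def
    by (simp add: T_def del: game_sem.simps(12)) (metis double_compl)
  have Gu: "\<Gamma> = X \<inter> game_sem g \<Gamma>" unfolding \<Gamma>_def by (rule dloop_unfold)
  have S2E: "fml_sem (S2 End) = - \<Gamma>" proof -
    have Gu': "\<Gamma> = - fml_sem (S End) \<inter> game_sem g \<Gamma>" using Gu unfolding X_def .
    have "fml_sem (S2 End) = - game_sem g \<Gamma> \<union> fml_sem (S End)" by (simp add: S2_def Ng)
    also have "\<dots> = - (- fml_sem (S End) \<inter> game_sem g \<Gamma>)" by auto
    also have "\<dots> = - \<Gamma>" using Gu' by simp
    finally show ?thesis .
  qed
  have H2: "HA (T S2) g"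
  proof (rule HA_cong[OF F0(1)])
    fix l show "fml_sem (T S2 l) = fml_sem (((T S)(End := T S (N a))) l)"
    proof (cases l)
      case End then show ?thesis using S2E Na by (simp add: T_def)
    next
      case (N x) then show ?thesis by (simp add: T_def S2_def)
    qed
  qed
  have IH: "game_sem pg Z \<subseteq> game_sem g (\<Gamma> \<union> Z)" for Z
    using DLoop.IH[OF F0(4) H2, of Z] S2E unfolding pg_def by simp
  define Q where "Q = gfp (\<lambda>Z. (X \<union> Y) \<inter> (game_sem g \<Gamma> \<union> game_sem pg Z))"
  have mQ: "mono (\<lambda>Z. (X \<union> Y) \<inter> (game_sem g \<Gamma> \<union> game_sem pg Z))"
    using mono_gs by (auto intro!: monoI dest: monoD)
  have Qu: "Q = (X \<union> Y) \<inter> (game_sem g \<Gamma> \<union> game_sem pg Q)" unfolding Q_def using gfp_unfold[OF mQ] .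
  have "\<Gamma> \<union> Q \<subseteq> gfp (\<lambda>Z. (X \<union> Y) \<inter> game_sem g Z)"
  proof (rule gfp_upperbound)
    have a: "game_sem g \<Gamma> \<subseteq> game_sem g (\<Gamma> \<union> Q)" by (rule gs_mono) auto
    have b: "game_sem pg Q \<subseteq> game_sem g (\<Gamma> \<union> Q)" by (rule IH)
    show "\<Gamma> \<union> Q \<subseteq> (X \<union> Y) \<inter> game_sem g (\<Gamma> \<union> Q)"
      using a b Qu Gu by blast
  qed
  moreover have "game_sem (proj_dem (DLoop a g) S) Y = Q"
    unfolding Q_def pg_def X_def S2_def by (simp add: Ng)
  ultimately show ?case unfolding X_def by auto
qed (auto simp: HA_def)

lemma demD: "distinct (labels \<gamma>) \<Longrightarrow> HA (T S) \<gamma> \<Longrightarrow> dem_subvalue S \<gamma>"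
proof (induction \<gamma> arbitrary: S rule: gind)
  case (Seq a g d)
  note F = HA_Seq[OF Seq.prems, unfolded T_upd]
  have "valid (Imp (S (N a)) (S (N (lbl g))))" using F(3,4) by (auto simp add: valid_def T_def)
  then show ?case using Seq.IH(1)[OF F(6) F(1)] Seq.IH(2)[OF F(7) F(2)] by (simp add: fun_upd_def)
next
  case (Choice a g d)
  note F = HA_Choice[OF Choice.prems]
  show ?case using Choice.IH(1)[OF F(6) F(1)] Choice.IH(2)[OF F(7) F(2)] F(3,4,5) by (auto simp add: valid_def T_def)
next
  case (DChoice a g d)
  note F = HA_DChoice[OF DChoice.prems]
  show ?case using DChoice.IH(1)[OF F(6) F(1)] DChoice.IH(2)[OF F(7) F(2)] F(3,4,5) by (auto simp add: valid_def T_def)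
next
  case (Loop a g)
  note F = HA_Loop[OF Loop.prems, unfolded T_upd]
  have "fml_sem (S (N a)) \<subseteq> fml_sem (S End) \<inter> fml_sem (S (N (lbl g)))"
    using F(2,3) loop_unfold[of a g "- fml_sem (S End)"] by (auto simp: T_def)
  then show ?case using Loop.IH[OF F(4) F(1)] by (auto simp: valid_def fun_upd_def)
next
  case (DLoop a g)
  note F = HA_DLoop[OF DLoop.prems, unfolded T_upd]
  have "game_sem (proj_dem (DLoop a g) S) (- fml_sem (S End)) \<subseteq> game_sem (DLoop a g) (- fml_sem (S End) \<union> - fml_sem (S End))"
    by (rule projD[OF DLoop.prems])
  then have "fml_sem (S (N a)) \<subseteq> - game_sem (proj_dem (DLoop a g) S) (- fml_sem (S End))"
    using F(2) by (auto simp: T_def simp del: proj_dem.simps game_sem.simps(12))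
  then show ?case using DLoop.IH[OF F(4) F(1)] by (auto simp: valid_def fun_upd_def simp del: proj_dem.simps)
qed (auto simp: valid_def T_def dest!: HA_atom simp del: game_sem.simps)


theorem mainTheorem7:
  fixes \<alpha> :: "'l game" and \<phi> :: "'l fml"
  assumes "distinct (labels \<alpha>)"
  shows "ang_subvalue (mp_ang \<alpha> \<phi>) \<alpha> \<and> valid (Imp (mp_ang \<alpha> \<phi> End) \<phi>)
         \<and> dem_subvalue (mp_dem \<alpha> \<phi>) \<alpha>"
proof (intro conjI)
  have "HA (mp_ang \<alpha> \<phi>) \<alpha>" by (simp add: HA_def)
  then show "ang_subvalue (mp_ang \<alpha> \<phi>) \<alpha>" by (rule angA[OF assms])
  show "valid (Imp (mp_ang \<alpha> \<phi> End) \<phi>)" by (simp add: valid_def)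
  have "HA (T (mp_dem \<alpha> \<phi>)) \<alpha>" by (simp add: HA_def T_def)
  then show "dem_subvalue (mp_dem \<alpha> \<phi>) \<alpha>" by (rule demD[OF assms])
qed

end
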